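(* For any state $\rho$ of $A$ and any state $\eta$ of $R$, $$H_{\mathcal{G}(\eta)}(\rho)=H_\eta(\mathcal{G}(\rho))=H_{\mathcal{G}(\eta)}(\mathcal{G}(\rho))=-\log\|\mathcal{G}(\eta)\|_\infty .$$
   Context: $G$ is a compact group with normalized Haar measure $dg$; finite-dimensional systems $A,R$ carry continuous unitary representations $U_A,U_R$. On a single system $\mathcal{G}(M)=\int dg\,U(g)MU(g)^\dagger$; on $RA$, $\mathcal{G}(M)=\int dg\,(U_R(g)\otimes U_A(g))M(U_R(g)\otimes U_A(g))^\dagger$. $H_{\min}(R|A)_\Omega=-\log_2\inf_{X\ge0}\{\mathrm{tr}[X]:\mathbb{1}_R\otimes X\ge\Omega_{RA}\}$, and $H_\eta(\tau):=H_{\min}(R|A)_{\mathcal{G}(\eta\otimes\tau)}$. $\|\cdot\|_\infty$ is the operator norm; logarithms base 2. *)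

theory Defs
  imports "HOL-Analysis.Analysis"
begin

text \<open>Finite-dimensional systems: complex matrices indexed by finite types.
  The compact group G is a type 'g of class topological_group_add
  (group law written additively, not assumed commutative).\<close>

definition adj :: "complex^'n^'m \<Rightarrow> complex^'m^'n" where
  "adj M = (\<chi> i j. cnj (M $ j $ i))"

definition mtrace :: "complex^'n^'n \<Rightarrow> complex" where
  "mtrace M = (\<Sum>i\<in>UNIV. M $ i $ i)"

definition psd :: "complex^'n^'n \<Rightarrow> bool" where
  "psd M \<longleftrightarrow> (\<forall>v::complex^'n. (\<Sum>i\<in>UNIV. \<Sum>j\<in>UNIV. cnj (v $ i) * M $ i $ j * v $ j) \<in> \<real>
       \<and> 0 \<le> Re (\<Sum>i\<in>UNIV. \<Sum>j\<in>UNIV. cnj (v $ i) * M $ i $ j * v $ j))"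

definition density :: "complex^'n^'n \<Rightarrow> bool" where
  "density M \<longleftrightarrow> psd M \<and> mtrace M = 1"

definition unitary :: "complex^'n^'n \<Rightarrow> bool" where
  "unitary M \<longleftrightarrow> adj M ** M = mat 1 \<and> M ** adj M = mat 1"

definition kron :: "complex^'r^'r \<Rightarrow> complex^'a^'a \<Rightarrow> complex^('r \<times> 'a)^('r \<times> 'a)" where
  "kron M N = (\<chi> p q. M $ fst p $ fst q * N $ snd p $ snd q)"

definition haar_prob :: "'g::topological_group_add measure \<Rightarrow> bool" where
  "haar_prob \<mu> \<longleftrightarrow> compact (UNIV :: 'g set) \<and> sets \<mu> = sets borel \<and> emeasure \<mu> (space \<mu>) = 1
     \<and> (\<forall>h A. A \<in> sets borel \<longrightarrow> emeasure \<mu> ((\<lambda>g. h + g) ` A) = emeasure \<mu> A)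
     \<and> (\<forall>h A. A \<in> sets borel \<longrightarrow> emeasure \<mu> ((\<lambda>g. g + h) ` A) = emeasure \<mu> A)"

definition unitary_rep :: "('g::topological_group_add \<Rightarrow> complex^'n^'n) \<Rightarrow> bool" where
  "unitary_rep U \<longleftrightarrow> continuous_on UNIV U \<and> (\<forall>g. unitary (U g))
     \<and> U 0 = mat 1 \<and> (\<forall>g h. U (g + h) = U g ** U h)"

definition twirl :: "'g::topological_group_add measure \<Rightarrow> ('g \<Rightarrow> complex^'n^'n)
     \<Rightarrow> complex^'n^'n \<Rightarrow> complex^'n^'n" where
  "twirl \<mu> U M = integral\<^sup>L \<mu> (\<lambda>g. U g ** M ** adj (U g))"

definition rep_RA :: "('g \<Rightarrow> complex^'r^'r) \<Rightarrow> ('g \<Rightarrow> complex^'a^'a)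
     \<Rightarrow> 'g \<Rightarrow> complex^('r \<times> 'a)^('r \<times> 'a)" where
  "rep_RA UR UA g = kron (UR g) (UA g)"

definition Hmin :: "complex^('r::finite \<times> 'a::finite)^('r \<times> 'a) \<Rightarrow> real" where
  "Hmin \<Omega> = - log 2 (Inf {Re (mtrace X) | X :: complex^'a^'a.
                  psd X \<and> psd (kron (mat 1 :: complex^'r^'r) X - \<Omega>)})"

definition H_eta :: "'g::topological_group_add measure \<Rightarrow> ('g \<Rightarrow> complex^'r^'r) \<Rightarrow> ('g \<Rightarrow> complex^'a^'a)
     \<Rightarrow> complex^'r^'r \<Rightarrow> complex^'a^'a \<Rightarrow> real" where
  "H_eta \<mu> UR UA \<eta> \<tau> = Hmin (twirl \<mu> (rep_RA UR UA) (kron \<eta> \<tau>))"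

end

theory Submission
  imports Defs
begin


definition cdot :: "complex^'n \<Rightarrow> complex^'n \<Rightarrow> complex" where
  "cdot u w = (\<Sum>i\<in>UNIV. cnj (u$i) * w$i)"

definition sq :: "complex^'n^'n \<Rightarrow> complex^'n \<Rightarrow> complex^'n \<Rightarrow> complex" where
  "sq M u v = cdot u (M *v v)"

lemma qf_eq: "(\<Sum>i\<in>UNIV. \<Sum>j\<in>UNIV. cnj (v $ i) * M $ i $ j * v $ j) = sq M v v"
  by (simp add: sq_def cdot_def matrix_vector_mult_def sum_distrib_left mult.assoc)

lemma psd_iff: "psd M \<longleftrightarrow> (\<forall>v. sq M v v \<in> \<real> \<and> 0 \<le> Re (sq M v v))"
  unfolding psd_def qf_eq ..

lemma mv_lin: "(M::complex^'n^'m) *v (a *s u + b *s v) = a *s (M *v u) + b *s (M *v v)"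
  apply (simp add: vec_eq_iff matrix_vector_mult_def sum.distrib sum_distrib_left ring_distribs)
  apply (intro allI arg_cong2[where f="(+)"] sum.cong)
  by (simp_all add: mult_ac)

lemma cdot_lin1: "cdot (a *s u + b *s v) w = cnj a * cdot u w + cnj b * cdot v w"
  by (simp add: cdot_def sum.distrib sum_distrib_left algebra_simps)

lemma cdot_lin2: "cdot u (a *s w + b *s w') = a * cdot u w + b * cdot u w'"
  by (simp add: cdot_def sum.distrib sum_distrib_left algebra_simps)

lemma sq_expand: "sq M (a *s u + b *s v) (a *s u + b *s v) =
   cnj a * a * sq M u u + cnj a * b * sq M u v + cnj b * a * sq M v u + cnj b * b * sq M v v"
  unfolding sq_def mv_lin cdot_lin1 cdot_lin2 by (simp add: algebra_simps)

lemma psd_herm: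
  assumes "psd M" shows "sq M v u = cnj (sq M u v)"
proof -
  have P: "\<And>x. sq M x x \<in> \<real>" using assms psd_iff by blast
  have e1: "sq M (1 *s u + 1 *s v) (1 *s u + 1 *s v) = sq M u u + sq M u v + sq M v u + sq M v v"
    using sq_expand[of M 1 u 1 v] by simp
  have e2: "sq M (1 *s u + \<i> *s v) (1 *s u + \<i> *s v) = sq M u u + \<i> * sq M u v - \<i> * sq M v u + sq M v v"
    using sq_expand[of M 1 u "\<i>" v] by simp
  have "Im (sq M u u + sq M u v + sq M v u + sq M v v) = 0"
    using P[of "1 *s u + 1 *s v"] e1 by (simp add: complex_is_Real_iff)
  moreover have "Im (sq M u u + \<i> * sq M u v - \<i> * sq M v u + sq M v v) = 0"
    using P[of "1 *s u + \<i> *s v"] e2 by (simp add: complex_is_Real_iff)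
  moreover have "Im (sq M u u) = 0" "Im (sq M v v) = 0" using P complex_is_Real_iff by auto
  ultimately show ?thesis by (simp add: complex_eq_iff)
qed

lemma psd_sq_real: "psd M \<Longrightarrow> sq M v v = of_real (Re (sq M v v))"
  using psd_iff by (metis Reals_cases Re_complex_of_real)

lemma psd_sq_nonneg: "psd M \<Longrightarrow> 0 \<le> Re (sq M v v)"
  using psd_iff by blast

lemma psd_CS:
  assumes "psd M" shows "(cmod (sq M u v))^2 \<le> Re (sq M u u) * Re (sq M v v)"
proof -
  define a where "a = Re (sq M u u)"
  define c where "c = Re (sq M v v)"
  define b where "b = sq M u v"
  have hu: "sq M u u = of_real a" using psd_sq_real[OF assms] a_def by blast
  have hv: "sq M v v = of_real c" using psd_sq_real[OF assms] c_def by blast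
  have hb: "sq M v u = cnj b" using psd_herm[OF assms] b_def by blast
  have bb: "b * cnj b = of_real ((cmod b)^2)" by (rule complex_norm_square[symmetric])
  have a0: "0 \<le> a" and c0: "0 \<le> c" using psd_sq_nonneg[OF assms] a_def c_def by auto
  have gen: "0 \<le> Re (cnj \<alpha> * \<alpha> * of_real a + cnj \<alpha> * \<beta> * b + cnj \<beta> * \<alpha> * cnj b + cnj \<beta> * \<beta> * of_real c)" for \<alpha> \<beta>
    using psd_sq_nonneg[OF assms, of "\<alpha> *s u + \<beta> *s v"] unfolding sq_expand hu hv hb b_def[symmetric] .
  show ?thesis
  proof (cases "c = 0")
    case False
    hence cp: "c > 0" using c0 by auto
    have "0 \<le> Re (cnj (of_real c) * of_real c * of_real a + cnj (of_real c) * (- cnj b) * b + cnj (- cnj b) * of_real c * cnj b + cnj (- cnj b) * (- cnj b) * of_real c)"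
      by (rule gen)
    also have "cnj (of_real c) * of_real c * of_real a + cnj (of_real c) * (- cnj b) * b + cnj (- cnj b) * of_real c * cnj b + cnj (- cnj b) * (- cnj b) * of_real c
       = of_real (c * (c * a - (cmod b)^2))"
      using bb by (simp add: algebra_simps power2_eq_square)
    finally have "0 \<le> c * (c * a - (cmod b)^2)" by simp
    hence "0 \<le> c * a - (cmod b)^2" using cp by (simp add: zero_le_mult_iff)
    thus ?thesis unfolding a_def c_def b_def by (simp add: mult.commute)
  next
    case True
    show ?thesis
    proof (cases "b = 0")
      case True thus ?thesis using a0 c0 unfolding a_def c_def b_def by simp
    next
      case False
      define t where "t = (a + 1) / (cmod b)^2"
      have bp: "(cmod b)^2 > 0" using False by simp
      have "0 \<le> Re (cnj 1 * 1 * of_real a + cnj 1 * (- of_real t * cnj b) * b + cnj (- of_real t * cnj b) * 1 * cnj b + cnj (- of_real t * cnj b) * (- of_real t * cnj b) * of_real c)"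
        by (rule gen)
      also have "cnj 1 * 1 * of_real a + cnj 1 * (- of_real t * cnj b) * b + cnj (- of_real t * cnj b) * 1 * cnj b + cnj (- of_real t * cnj b) * (- of_real t * cnj b) * of_real c
         = of_real (a - 2 * t * (cmod b)^2)"
        using bb \<open>c = 0\<close> by (simp add: algebra_simps)
      finally have "0 \<le> a - 2 * t * (cmod b)^2" by simp
      moreover have "t * (cmod b)^2 = a + 1" unfolding t_def using bp by simp
      ultimately have False using a0 by linarith
      thus ?thesis ..
    qed
  qed
qed


lemma sq_axis_left: "sq M (axis k 1) v = (M *v v)$k"
proof -
  have "sq M (axis k 1) v = (\<Sum>i\<in>UNIV. if i = k then (M *v v)$i else 0)"
    unfolding sq_def cdot_def by (intro sum.cong) (auto simp: axis_def)
  thus ?thesis by simp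
qed

lemma mv_axis: "(M *v axis j 1)$i = (M$i$j :: complex)"
proof -
  have "(M *v axis j 1)$i = (\<Sum>k\<in>UNIV. if k = j then M$i$k else 0)"
    unfolding matrix_vector_mult_def vec_lambda_beta by (intro sum.cong) (auto simp: axis_def)
  thus ?thesis by simp
qed

lemma sq_axis: "sq M (axis i 1) (axis j 1) = M$i$j"
  by (simp add: sq_axis_left mv_axis)

lemma psd_entry_herm: "psd S \<Longrightarrow> S$j$i = cnj (S$i$j)"
  using psd_herm[of S "axis i 1" "axis j 1"] by (simp add: sq_axis)

lemma sq_add: "sq (A + B) u v = sq A u v + sq B u v"
  by (simp add: sq_def cdot_def matrix_vector_mult_def sum.distrib ring_distribs)

lemma sq_diff: "sq (A - B) u v = sq A u v - sq B u v"
  by (simp add: sq_def cdot_def matrix_vector_mult_def sum_subtractf ring_distribs)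

lemma sq_scaleR: "sq (r *\<^sub>R A) u v = of_real r * sq A u v"
  by (simp add: sq_def cdot_def matrix_vector_mult_def sum_distrib_left) (simp add: scaleR_conv_of_real mult_ac)

lemma psd_add: "psd A \<Longrightarrow> psd B \<Longrightarrow> psd (A + B)"
  unfolding psd_iff sq_add by (simp add: Reals_add)

lemma psd_scaleR: "0 \<le> r \<Longrightarrow> psd A \<Longrightarrow> psd (r *\<^sub>R A)"
  unfolding psd_iff sq_scaleR by (simp add: Reals_mult)

lemma psd_zero: "psd 0"
  unfolding psd_iff by (simp add: sq_def cdot_def matrix_vector_mult_def)

lemma kron_add: "kron P (A + B) = kron P A + kron P B"
  by (simp add: kron_def vec_eq_iff ring_distribs)

lemma kron_scaleR: "kron P (r *\<^sub>R A) = r *\<^sub>R kron P A"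
  by (simp add: kron_def vec_eq_iff)

lemma kron_zero: "kron P 0 = 0"
  by (simp add: kron_def vec_eq_iff)

definition outer :: "complex^'n \<Rightarrow> complex^'n^'n" where
  "outer x = (\<chi> i j. x$i * cnj (x$j))"

lemma sum_pair: "(\<Sum>p\<in>(UNIV::('r::finite\<times>'a::finite) set). f p) = (\<Sum>r\<in>UNIV. \<Sum>a\<in>UNIV. f (r,a))"
  unfolding UNIV_Times_UNIV[symmetric] sum.cartesian_product by simp



lemma psd_kron_outer:
  fixes P :: "complex^'r^'r" and x :: "complex^'a"
  assumes "psd P" shows "psd (kron P (outer x))"
  unfolding psd_def
proof
  fix w :: "complex^('r\<times>'a)"
  define u where "u = (\<chi> r. \<Sum>a\<in>UNIV. cnj (x$a) * w$(r,a))"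
  define F where "F = (\<lambda>r a r' a'. cnj (w$(r,a)) * x$a * P$r$r' * cnj (x$a') * w$(r',a'))"
  have L: "(\<Sum>i\<in>UNIV. \<Sum>j\<in>UNIV. cnj (w $ i) * kron P (outer x) $ i $ j * w $ j)
      = (\<Sum>r\<in>UNIV. \<Sum>a\<in>UNIV. \<Sum>r'\<in>UNIV. \<Sum>a'\<in>UNIV. F r a r' a')"
    unfolding sum_pair by (simp add: kron_def outer_def F_def mult_ac)
  also have "\<dots> = (\<Sum>r\<in>UNIV. \<Sum>r'\<in>UNIV. \<Sum>a\<in>UNIV. \<Sum>a'\<in>UNIV. F r a r' a')"
    by (rule sum.cong[OF refl], rule sum.swap)
  also have "\<dots> = (\<Sum>r\<in>UNIV. \<Sum>r'\<in>UNIV. cnj (u$r) * P$r$r' * u$r')"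
  proof (intro sum.cong refl)
    fix r r'
    have "cnj (u$r) * P$r$r' * u$r' = (\<Sum>a\<in>UNIV. x$a * cnj (w$(r,a))) * (P$r$r' * (\<Sum>a'\<in>UNIV. cnj (x$a') * w$(r',a')))"
      by (simp add: u_def mult.assoc)
    also have "\<dots> = (\<Sum>a\<in>UNIV. \<Sum>a'\<in>UNIV. x$a * cnj (w$(r,a)) * (P$r$r' * (cnj (x$a') * w$(r',a'))))"
      unfolding sum_distrib_left[of "P$r$r'"] sum_product by simp
    also have "\<dots> = (\<Sum>a\<in>UNIV. \<Sum>a'\<in>UNIV. F r a r' a')"
      by (simp add: F_def mult_ac)
    finally show "(\<Sum>a\<in>UNIV. \<Sum>a'\<in>UNIV. F r a r' a') = cnj (u$r) * P$r$r' * u$r'" by simp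
  qed
  finally have E: "(\<Sum>i\<in>UNIV. \<Sum>j\<in>UNIV. cnj (w $ i) * kron P (outer x) $ i $ j * w $ j)
      = (\<Sum>r\<in>UNIV. \<Sum>r'\<in>UNIV. cnj (u$r) * P$r$r' * u$r')" .
  show "(\<Sum>i\<in>UNIV. \<Sum>j\<in>UNIV. cnj (w $ i) * kron P (outer x) $ i $ j * w $ j) \<in> \<real> \<and>
         0 \<le> Re (\<Sum>i\<in>UNIV. \<Sum>j\<in>UNIV. cnj (w $ i) * kron P (outer x) $ i $ j * w $ j)"
    unfolding E using assms unfolding psd_def by blast
qed

lemma sq_outer: "sq (outer x) v v = cnj (cdot x v) * cdot x v"
proof -
  have "sq (outer x) v v = (\<Sum>i\<in>UNIV. cnj (v$i) * x$i) * cdot x v"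
    by (simp add: sq_def cdot_def outer_def matrix_vector_mult_def sum_distrib_left sum_distrib_right mult_ac)
  also have "(\<Sum>i\<in>UNIV. cnj (v$i) * x$i) = cnj (cdot x v)"
    by (simp add: cdot_def mult.commute)
  finally show ?thesis .
qed

lemma psd_kron_supp:
  fixes P :: "complex^'r^'r"
  assumes P: "psd P" and K: "finite K"
  shows "\<forall>S::complex^'a^'a. psd S \<and> (\<forall>i j. i \<notin> K \<longrightarrow> S$i$j = 0) \<longrightarrow> psd (kron P S)"
  using K
proof (induction K rule: finite_induct)
  case empty
  show ?case
  proof (intro allI impI)
    fix S :: "complex^'a^'a" assume "psd S \<and> (\<forall>i j. i \<notin> {} \<longrightarrow> S$i$j = 0)"
    hence "S = 0" by (simp add: vec_eq_iff)
    thus "psd (kron P S)" by (simp add: kron_zero psd_zero)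
  qed
next
  case (insert k K)
  show ?case
  proof (intro allI impI)
    fix S :: "complex^'a^'a" assume SA: "psd S \<and> (\<forall>i j. i \<notin> insert k K \<longrightarrow> S$i$j = 0)"
    hence S: "psd S" and supp: "\<And>i j. i \<notin> insert k K \<Longrightarrow> S$i$j = 0" by auto
    define d where "d = Re (S$k$k)"
    have Skk: "S$k$k = of_real d" using psd_sq_real[OF S, of "axis k 1"] by (simp add: sq_axis d_def)
    have d0: "0 \<le> d" using psd_sq_nonneg[OF S, of "axis k 1"] by (simp add: sq_axis d_def)
    show "psd (kron P S)"
    proof (cases "d = 0")
      case True
      have "S$k$j = 0" for j
      proof -
        have "(cmod (S$k$j))^2 \<le> Re (S$k$k) * Re (S$j$j)"
          using psd_CS[OF S, of "axis k 1" "axis j 1"] by (simp add: sq_axis)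
        thus ?thesis using True d_def by simp
      qed
      hence "\<forall>i j. i \<notin> K \<longrightarrow> S$i$j = 0" using supp by (metis insertE)
      thus ?thesis using insert.IH S by blast
    next
      case False
      hence dp: "d > 0" using d0 by simp
      define x where "x = (\<chi> i. S$i$k)"
      define S' where "S' = S - (1/d) *\<^sub>R outer x"
      have SS: "S = S' + (1/d) *\<^sub>R outer x" unfolding S'_def by simp
      have psdS': "psd S'"
        unfolding psd_iff
      proof
        fix v
        define m where "m = (S *v v)$k"
        define t where "t = - m / of_real d"
        define w where "w = 1 *s v + t *s axis k 1"
        have cx: "cdot x v = m"
          unfolding cdot_def x_def m_def matrix_vector_mult_def
          by (simp add: psd_entry_herm[OF S, of k] mult.commute)
        have h1: "sq S (axis k 1) v = m" by (simp add: sq_axis_left m_def)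
        have h2: "sq S v (axis k 1) = cnj m" using psd_herm[OF S] h1 by metis
        have "sq S w w = cnj 1 * 1 * sq S v v + cnj 1 * t * sq S v (axis k 1) + cnj t * 1 * sq S (axis k 1) v
              + cnj t * t * sq S (axis k 1) (axis k 1)"
          unfolding w_def by (rule sq_expand)
        also have "\<dots> = sq S v v - of_real (1/d) * (cnj m * m)"
          unfolding h1 h2 sq_axis Skk t_def using dp
          by (simp add: field_simps power2_eq_square)
        also have "\<dots> = sq S' v v"
          unfolding S'_def sq_diff sq_scaleR sq_outer cx ..
        finally have "sq S' v v = sq S w w" by simp
        thus "sq S' v v \<in> \<real> \<and> 0 \<le> Re (sq S' v v)" using S psd_iff by metis
      qed
      have suppS': "\<forall>i j. i \<notin> K \<longrightarrow> S'$i$j = 0"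
      proof (intro allI impI)
        fix i j assume iK: "i \<notin> K"
        show "S'$i$j = 0"
        proof (cases "i = k")
          case True
          have "S'$k$j = S$k$j - (1/d) * (S$k$k * cnj (S$j$k))"
            by (simp add: S'_def outer_def x_def) (simp add: scaleR_conv_of_real)
          also have "\<dots> = 0" using dp by (simp add: Skk psd_entry_herm[OF S, of k j])
          finally show ?thesis using True by simp
        next
          case False
          hence "i \<notin> insert k K" using iK by simp
          thus ?thesis by (simp add: S'_def outer_def x_def supp)
        qed
      qed
      have "psd (kron P S')" using insert.IH psdS' suppS' by blast
      moreover have "psd (kron P ((1/d) *\<^sub>R outer x))"
        unfolding kron_scaleR using dp by (intro psd_scaleR psd_kron_outer P) simp
      ultimately show ?thesis unfolding SS kron_add by (rule psd_add)
    qed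
  qed
qed

lemma psd_kron:
  fixes P :: "complex^'r^'r" and S :: "complex^'a^'a"
  assumes "psd P" "psd S" shows "psd (kron P S)"
proof -
  have "finite (UNIV::'a set)" by simp
  thus ?thesis using psd_kron_supp[OF assms(1), of UNIV] assms(2) by blast
qed



lemma cdot_self: "cdot v v = of_real ((norm v)^2)"
proof -
  have "(norm v)^2 = (\<Sum>i\<in>UNIV. (cmod (v$i))^2)"
    unfolding norm_vec_def L2_set_def by (simp add: sum_nonneg)
  hence "of_real ((norm v)^2) = (\<Sum>i\<in>UNIV. of_real ((cmod (v$i))^2) :: complex)"
    by simp
  also have "\<dots> = (\<Sum>i\<in>UNIV. cnj (v$i) * v$i)"
    by (intro sum.cong refl) (simp only: complex_norm_square mult.commute)
  finally have "of_real ((norm v)^2) = (\<Sum>i\<in>UNIV. cnj (v$i) * v$i)" .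
  thus ?thesis by (simp add: cdot_def)
qed

lemma sq_mat1: "sq (mat 1) u v = cdot u v"
  by (simp add: sq_def)

lemma psd_mat1: "psd (mat 1 :: complex^'n^'n)"
  unfolding psd_iff sq_mat1 cdot_self by simp

lemma cdot_CS: "cmod (cdot u w) \<le> norm u * norm w"
proof -
  have "(cmod (cdot u w))^2 \<le> (norm u)^2 * (norm w)^2"
    using psd_CS[OF psd_mat1, of u w] unfolding sq_mat1 cdot_self by simp
  hence "(cmod (cdot u w))^2 \<le> (norm u * norm w)^2" by (simp add: power_mult_distrib)
  thus ?thesis by (rule power2_le_imp_le) simp
qed

lemma re_sq_le:
  fixes \<omega> :: "complex^'r^'r"
  shows "Re (sq \<omega> v v) \<le> onorm ((*v) \<omega>) * (norm v)^2"
proof -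
  have "Re (sq \<omega> v v) \<le> cmod (cdot v (\<omega> *v v))" unfolding sq_def by (rule complex_Re_le_cmod)
  also have "\<dots> \<le> norm v * norm (\<omega> *v v)" by (rule cdot_CS)
  also have "\<dots> \<le> norm v * (onorm ((*v) \<omega>) * norm v)"
    by (intro mult_left_mono onorm) auto
  finally show ?thesis by (simp add: power2_eq_square mult_ac)
qed

lemma feas_quad:
  fixes X \<tau> :: "complex^'a^'a" and \<omega> :: "complex^'r^'r"
    and v :: "complex^'r" and a :: 'a
  defines "w \<equiv> (\<chi> p. if snd p = a then v$(fst p) else 0) :: complex^('r\<times>'a)"
  shows "(\<Sum>i\<in>UNIV. \<Sum>j\<in>UNIV. cnj (w$i) * (kron (mat 1) X - kron \<omega> \<tau>)$i$j * w$j)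
     = cdot v v * X$a$a - sq \<omega> v v * \<tau>$a$a"
proof -
  define K where "K = kron (mat 1) X - kron \<omega> \<tau>"
  have "(\<Sum>i\<in>UNIV. \<Sum>j\<in>UNIV. cnj (w$i) * K$i$j * w$j)
      = (\<Sum>r\<in>UNIV. \<Sum>a1\<in>UNIV. \<Sum>r'\<in>UNIV. \<Sum>a2\<in>UNIV. cnj (w$(r,a1)) * K$(r,a1)$(r',a2) * w$(r',a2))"
    unfolding sum_pair ..
  also have "\<dots> = (\<Sum>r\<in>UNIV. \<Sum>r'\<in>UNIV. cnj (v$r) * K$(r,a)$(r',a) * v$r')"
  proof (intro sum.cong refl)
    fix r
    have step: "(\<Sum>r'\<in>UNIV. \<Sum>a2\<in>UNIV. cnj (w$(r,a1)) * K$(r,a1)$(r',a2) * w$(r',a2))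
       = (if a1 = a then (\<Sum>r'\<in>UNIV. cnj (v$r) * K$(r,a)$(r',a) * v$r') else 0)" for a1
    proof (cases "a1 = a")
      case True
      have "cnj (w$(r,a1)) * K$(r,a1)$(r',a2) * w$(r',a2) = (if a2 = a then cnj (v$r) * K$(r,a)$(r',a) * v$r' else 0)" for r' a2
        using True by (simp add: w_def)
      thus ?thesis using True by simp
    next
      case False thus ?thesis by (simp add: w_def)
    qed
    show "(\<Sum>a1\<in>UNIV. \<Sum>r'\<in>UNIV. \<Sum>a2\<in>UNIV. cnj (w$(r,a1)) * K$(r,a1)$(r',a2) * w$(r',a2))
       = (\<Sum>r'\<in>UNIV. cnj (v$r) * K$(r,a)$(r',a) * v$r')"
      unfolding step by simp
  qed
  also have "\<dots> = (\<Sum>r\<in>UNIV. \<Sum>r'\<in>UNIV. (if r = r' then cnj (v$r) * v$r' * X$a$a else 0) - cnj (v$r) * \<omega>$r$r' * v$r' * \<tau>$a$a)"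
    by (intro sum.cong refl) (simp add: K_def kron_def mat_def algebra_simps)
  also have "\<dots> = cdot v v * X$a$a - sq \<omega> v v * \<tau>$a$a"
    by (simp add: sum_subtractf cdot_def sq_def matrix_vector_mult_def sum_distrib_left sum_distrib_right mult_ac)
  finally show ?thesis unfolding K_def .
qed

lemma Re_mtrace_nonneg: "psd X \<Longrightarrow> 0 \<le> Re (mtrace X)"
  unfolding mtrace_def Re_sum
  by (intro sum_nonneg) (metis psd_sq_nonneg sq_axis)

lemma psd_diag_real: "psd X \<Longrightarrow> X$a$a = of_real (Re (X$a$a))"
  by (metis psd_sq_real sq_axis)

lemma Hmin_lower:
  fixes X \<tau> :: "complex^'a^'a" and \<omega> :: "complex^'r^'r"
  assumes om: "psd \<omega>" and tau: "density \<tau>" and X: "psd X" and F: "psd (kron (mat 1) X - kron \<omega> \<tau>)"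
  shows "Re (sq \<omega> v v) \<le> Re (mtrace X) * (norm v)^2"
proof -
  have tp: "psd \<tau>" and tr: "mtrace \<tau> = 1" using tau unfolding density_def by auto
  obtain q where q: "sq \<omega> v v = of_real q" using psd_sq_real[OF om] by blast
  have each: "0 \<le> (norm v)^2 * Re (X$a$a) - q * Re (\<tau>$a$a)" for a
  proof -
    define w :: "complex^('r\<times>'a)" where "w = (\<chi> p. if snd p = a then v$(fst p) else 0)"
    have "0 \<le> Re (\<Sum>i\<in>UNIV. \<Sum>j\<in>UNIV. cnj (w$i) * (kron (mat 1) X - kron \<omega> \<tau>)$i$j * w$j)"
      using F unfolding psd_def by blast
    also have "\<dots> = Re (cdot v v * X$a$a - sq \<omega> v v * \<tau>$a$a)"
      unfolding w_def by (rule arg_cong[where f=Re], rule feas_quad)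
    also have "\<dots> = (norm v)^2 * Re (X$a$a) - q * Re (\<tau>$a$a)"
      unfolding cdot_self q by simp
    finally show ?thesis .
  qed
  have "0 \<le> (\<Sum>a\<in>UNIV. (norm v)^2 * Re (X$a$a) - q * Re (\<tau>$a$a))"
    by (intro sum_nonneg each)
  also have "\<dots> = (norm v)^2 * Re (mtrace X) - q * Re (mtrace \<tau>)"
    by (simp add: mtrace_def sum_subtractf sum_distrib_left)
  finally show ?thesis using tr q by (simp add: mult.commute)
qed


lemma Hmin_kron:
  fixes \<tau> :: "complex^'a^'a" and \<omega> :: "complex^'r^'r"
  assumes om: "density \<omega>" and tau: "density \<tau>"
  shows "Hmin (kron \<omega> \<tau>) = - log 2 (onorm (\<lambda>v. \<omega> *v v))"
proof -
  have op: "psd \<omega>" and tp: "psd \<tau>" and tr: "mtrace \<tau> = 1" using om tau unfolding density_def by auto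
  define s where "s = onorm (\<lambda>v. \<omega> *v v)"
  have bl: "bounded_linear ((*v) \<omega>)" by (rule matrix_vector_mul_bounded_linear)
  have s0: "0 \<le> s" unfolding s_def by (rule onorm_pos_le[OF bl])
  have ons: "norm (\<omega> *v v) \<le> s * norm v" for v unfolding s_def by (rule onorm[OF bl])
  define SS where "SS = {Re (mtrace X) | X :: complex^'a^'a. psd X \<and> psd (kron (mat 1 :: complex^'r^'r) X - kron \<omega> \<tau>)}"
  have mem: "s \<in> SS"
  proof -
    have e: "kron (mat 1) (s *\<^sub>R \<tau>) - kron \<omega> \<tau> = kron (s *\<^sub>R mat 1 - \<omega>) \<tau>"
      by (simp add: vec_eq_iff kron_def mat_def) (simp add: scaleR_conv_of_real algebra_simps)
    have p1: "psd (s *\<^sub>R mat 1 - \<omega>)"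
      unfolding psd_iff
    proof
      fix v
      obtain q where q: "sq \<omega> v v = of_real q" using psd_sq_real[OF op] by blast
      have "sq (s *\<^sub>R mat 1 - \<omega>) v v = of_real (s * (norm v)^2 - q)"
        unfolding sq_diff sq_scaleR sq_mat1 cdot_self q by simp
      moreover have "q \<le> s * (norm v)^2" using re_sq_le[of \<omega> v] q unfolding s_def by simp
      ultimately show "sq (s *\<^sub>R mat 1 - \<omega>) v v \<in> \<real> \<and> 0 \<le> Re (sq (s *\<^sub>R mat 1 - \<omega>) v v)"
        by simp
    qed
    have "psd (s *\<^sub>R \<tau>)" by (rule psd_scaleR[OF s0 tp])
    moreover have "psd (kron (mat 1) (s *\<^sub>R \<tau>) - kron \<omega> \<tau>)" unfolding e by (rule psd_kron[OF p1 tp])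
    moreover have "Re (mtrace (s *\<^sub>R \<tau>)) = s"
    proof -
      have "mtrace (s *\<^sub>R \<tau>) = s *\<^sub>R mtrace \<tau>"
        unfolding mtrace_def by (simp add: scaleR_sum_right)
      thus ?thesis using tr by simp
    qed
    ultimately show ?thesis unfolding SS_def by force
  qed
  have low: "s \<le> t" if "t \<in> SS" for t
  proof -
    obtain X where X: "psd X" and F: "psd (kron (mat 1 :: complex^'r^'r) X - kron \<omega> \<tau>)" and t: "t = Re (mtrace X)"
      using \<open>t \<in> SS\<close> unfolding SS_def by blast
    have t0: "0 \<le> t" using Re_mtrace_nonneg[OF X] t by simp
    have qb: "Re (sq \<omega> v v) \<le> t * (norm v)^2" for v
      using Hmin_lower[OF op tau X F] t by simp
    have key: "norm (\<omega> *v v) \<le> sqrt (s * t) * norm v" for v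
    proof -
      define w where "w = \<omega> *v v"
      have "sq \<omega> w v = of_real ((norm w)^2)" unfolding sq_def w_def[symmetric] cdot_self ..
      hence "cmod (sq \<omega> w v) = (norm w)^2" by (simp only: norm_of_real) simp
      hence "((norm w)^2)^2 \<le> Re (sq \<omega> w w) * Re (sq \<omega> v v)"
        using psd_CS[OF op, of w v] by simp
      also have "\<dots> \<le> (s * (norm w)^2) * (t * (norm v)^2)"
      proof (rule mult_mono)
        show "Re (sq \<omega> w w) \<le> s * (norm w)^2" using re_sq_le[of \<omega> w] unfolding s_def .
        show "Re (sq \<omega> v v) \<le> t * (norm v)^2" by (rule qb)
        show "0 \<le> s * (norm w)^2" using s0 by simp
        show "0 \<le> Re (sq \<omega> v v)" by (rule psd_sq_nonneg[OF op])
      qed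
      finally have A: "((norm w)^2)^2 \<le> (norm w)^2 * (s * t * (norm v)^2)" by (simp add: mult_ac)
      have "(norm w)^2 \<le> s * t * (norm v)^2"
      proof (cases "norm w = 0")
        case True thus ?thesis using s0 t0 by simp
      next
        case False
        hence "(norm w)^2 > 0" by simp
        moreover have "((norm w)^2) * ((norm w)^2) \<le> (norm w)^2 * (s * t * (norm v)^2)"
          using A by (simp add: power2_eq_square)
        ultimately show ?thesis by (rule mult_left_le_imp_le[rotated])
      qed
      also have "\<dots> = (sqrt (s * t) * norm v)^2" using s0 t0 by (simp add: power_mult_distrib)
      finally show ?thesis unfolding w_def
        by (rule power2_le_imp_le) (use s0 t0 in simp)
    qed
    have "s \<le> sqrt (s * t)" unfolding s_def by (rule onorm_le) (rule key[unfolded s_def])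
    hence "s^2 \<le> (sqrt (s * t))^2" using s0 by (intro power_mono) auto
    hence "s^2 \<le> s * t" using s0 t0 by simp
    thus "s \<le> t" using s0 t0 by (cases "s = 0") (auto simp: power2_eq_square)
  qed
  have "Inf SS = s" by (rule cInf_eq_minimum[OF mem low])
  thus ?thesis unfolding Hmin_def SS_def s_def by simp
qed



lemma haar_sets: "haar_prob \<mu> \<Longrightarrow> sets \<mu> = sets borel"
  unfolding haar_prob_def by blast

lemma haar_space: "haar_prob \<mu> \<Longrightarrow> space \<mu> = UNIV"
  using sets_eq_imp_space_eq[OF haar_sets] by (metis space_borel)

lemma haar_fin: "haar_prob \<mu> \<Longrightarrow> finite_measure \<mu>"
  unfolding haar_prob_def by (intro finite_measureI) simp

lemma haar_measure1: "haar_prob \<mu> \<Longrightarrow> measure \<mu> (space \<mu>) = 1"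
  unfolding haar_prob_def by (simp add: measure_def)

lemma haar_meas:
  fixes F :: "'g::topological_group_add \<Rightarrow> 'b::{banach, second_countable_topology}"
  assumes "haar_prob \<mu>" "continuous_on UNIV F"
  shows "F \<in> borel_measurable \<mu>"
proof -
  have "F \<in> borel_measurable borel" by (rule borel_measurable_continuous_onI[OF assms(2)])
  moreover have "measurable \<mu> (borel::'b measure) = measurable borel borel"
    by (rule measurable_cong_sets[OF haar_sets[OF assms(1)] refl])
  ultimately show ?thesis by simp
qed

lemma haar_integrable:
  fixes F :: "'g::topological_group_add \<Rightarrow> 'b::{banach, second_countable_topology}"
  assumes H: "haar_prob \<mu>" and C: "continuous_on UNIV F"
  shows "integrable \<mu> F"
proof -
  have "compact (UNIV::'g set)" using H unfolding haar_prob_def by blast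
  hence "compact (F ` UNIV)" by (rule compact_continuous_image[OF C])
  hence "bounded (F ` UNIV)" by (rule compact_imp_bounded)
  then obtain B where B: "\<And>x. norm (F x) \<le> B" unfolding bounded_iff by blast
  show ?thesis
    using finite_measure.integrable_const_bound[OF haar_fin[OF H], where f=F and B=B]
      B haar_meas[OF H C] by simp
qed

lemma haar_shift:
  fixes F :: "'g::topological_group_add \<Rightarrow> 'b::{banach, second_countable_topology}"
  assumes H: "haar_prob \<mu>" and C: "continuous_on UNIV F"
  shows "integral\<^sup>L \<mu> (\<lambda>g. F (h + g)) = integral\<^sup>L \<mu> F"
proof -
  have sb: "sets \<mu> = sets borel" by (rule haar_sets[OF H])
  have sp: "space \<mu> = UNIV" by (rule haar_space[OF H])
  have mf: "(\<lambda>g. h + g) \<in> measurable \<mu> \<mu>"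
  proof -
    have "(\<lambda>g::'g. h + g) \<in> borel_measurable borel"
      by (intro borel_measurable_continuous_onI continuous_intros)
    moreover have "measurable \<mu> \<mu> = measurable borel borel"
      by (rule measurable_cong_sets[OF sb sb])
    ultimately show ?thesis by simp
  qed
  have D: "distr \<mu> \<mu> (\<lambda>g. h + g) = \<mu>"
  proof (rule measure_eqI)
    show "sets (distr \<mu> \<mu> (\<lambda>g. h + g)) = sets \<mu>" by simp
    fix A assume A: "A \<in> sets (distr \<mu> \<mu> (\<lambda>g. h + g))"
    hence A': "A \<in> sets borel" using sb by simp
    have pre: "(\<lambda>g. h + g) -` A \<inter> space \<mu> = (\<lambda>g. - h + g) ` A"
    proof -
      have "x \<in> (\<lambda>g. h + g) -` A \<longleftrightarrow> x \<in> (\<lambda>g. - h + g) ` A" for x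
      proof
        assume "x \<in> (\<lambda>g. h + g) -` A"
        hence "h + x \<in> A" by simp
        thus "x \<in> (\<lambda>g. - h + g) ` A" by (intro image_eqI[of _ _ "h + x"]) (simp_all add: add.assoc[symmetric])
      next
        assume "x \<in> (\<lambda>g. - h + g) ` A"
        then obtain y where "y \<in> A" "x = - h + y" by blast
        thus "x \<in> (\<lambda>g. h + g) -` A" by (simp add: add.assoc[symmetric])
      qed
      thus ?thesis unfolding sp by blast
    qed
    have "emeasure (distr \<mu> \<mu> (\<lambda>g. h + g)) A = emeasure \<mu> ((\<lambda>g. h + g) -` A \<inter> space \<mu>)"
      using A by (intro emeasure_distr[OF mf]) simp
    also have "\<dots> = emeasure \<mu> A" unfolding pre using H A' unfolding haar_prob_def by blast
    finally show "emeasure (distr \<mu> \<mu> (\<lambda>g. h + g)) A = emeasure \<mu> A" .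
  qed
  have "integral\<^sup>L (distr \<mu> \<mu> (\<lambda>g. h + g)) F = integral\<^sup>L \<mu> (\<lambda>g. F (h + g))"
    by (rule integral_distr[OF mf haar_meas[OF H C]])
  thus ?thesis unfolding D by simp
qed

lemma bl_eucl:
  fixes f :: "'a::euclidean_space \<Rightarrow> 'b::real_normed_vector"
  assumes "\<And>x y. f (x + y) = f x + f y" "\<And>r x. f (r *\<^sub>R x) = r *\<^sub>R f x"
  shows "bounded_linear f"
  using linear_conv_bounded_linear linearI assms by blast



lemma adj_mult: "adj (A ** B) = adj B ** (adj A :: complex^_^_)"
  by (simp add: vec_eq_iff adj_def matrix_matrix_mult_def mult.commute)

lemma cdot_adj: "cdot u (A *v w) = cdot (adj A *v u) w"
proof -
  have "cdot u (A *v w) = (\<Sum>i\<in>UNIV. \<Sum>j\<in>UNIV. cnj (u$i) * A$i$j * w$j)"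
    by (simp add: cdot_def matrix_vector_mult_def sum_distrib_left mult.assoc)
  also have "\<dots> = (\<Sum>j\<in>UNIV. \<Sum>i\<in>UNIV. cnj (u$i) * A$i$j * w$j)" by (rule sum.swap)
  also have "\<dots> = cdot (adj A *v u) w"
    by (simp add: cdot_def adj_def matrix_vector_mult_def sum_distrib_left sum_distrib_right mult_ac)
  finally show ?thesis .
qed

lemma mtrace_comm: "mtrace (A ** B) = mtrace (B ** (A :: complex^_^_))"
proof -
  have "mtrace (A ** B) = (\<Sum>i\<in>UNIV. \<Sum>k\<in>UNIV. A$i$k * B$k$i)"
    by (simp add: mtrace_def matrix_matrix_mult_def)
  also have "\<dots> = (\<Sum>k\<in>UNIV. \<Sum>i\<in>UNIV. A$i$k * B$k$i)" by (rule sum.swap)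
  also have "\<dots> = mtrace (B ** A)"
    by (simp add: mtrace_def matrix_matrix_mult_def mult.commute)
  finally show ?thesis .
qed

lemma mm_add_left: "(A + B) ** C = A ** C + B ** (C :: complex^_^_)"
  by (simp add: vec_eq_iff matrix_matrix_mult_def sum.distrib ring_distribs)

lemma mm_scaleR_left: "(r *\<^sub>R A) ** B = r *\<^sub>R (A ** (B :: complex^_^_))"
  by (simp add: vec_eq_iff matrix_matrix_mult_def scaleR_sum_right)

lemma mm_scaleR_right: "A ** (r *\<^sub>R B) = r *\<^sub>R (A ** (B :: complex^_^_))"
  by (simp add: vec_eq_iff matrix_matrix_mult_def scaleR_sum_right)

lemma bl_conj: "bounded_linear (\<lambda>X. A ** X ** (B :: complex^'n^'n))"
  by (rule bl_eucl) (simp_all add: matrix_add_ldistrib mm_add_left mm_scaleR_left mm_scaleR_right)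

lemma urep_unitary: "unitary_rep U \<Longrightarrow> adj (U g) ** U g = mat 1"
  unfolding unitary_rep_def unitary_def by blast

lemma urep_hom: "unitary_rep U \<Longrightarrow> U (g + h) = U g ** U h"
  unfolding unitary_rep_def by blast

lemma urep_cont: "unitary_rep U \<Longrightarrow> continuous_on UNIV U"
  unfolding unitary_rep_def by blast

lemma conj_cont:
  fixes U :: "'g::topological_group_add \<Rightarrow> complex^'n^'n"
  assumes "unitary_rep U"
  shows "continuous_on UNIV (\<lambda>g. U g ** M ** adj (U g))"
proof -
  have c: "continuous_on UNIV (\<lambda>g. U g $ i $ j)" for i j
    by (intro continuous_on_component urep_cont[OF assms])
  show ?thesis
    unfolding matrix_matrix_mult_def adj_def vec_lambda_beta
    by (intro continuous_intros c)
qed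

lemma conj_comp:
  assumes "unitary_rep U"
  shows "U h ** (U g ** M ** adj (U g)) ** adj (U h) = U (h + g) ** M ** adj (U (h + g))"
  unfolding urep_hom[OF assms] adj_mult by (simp add: matrix_mul_assoc)

lemma twirl_integrable:
  assumes "haar_prob \<mu>" "unitary_rep U"
  shows "integrable \<mu> (\<lambda>g. U g ** M ** adj (U g))"
  by (rule haar_integrable[OF assms(1) conj_cont[OF assms(2)]])

lemma twirl_inv:
  assumes H: "haar_prob \<mu>" and U: "unitary_rep U"
  shows "U h ** twirl \<mu> U M ** adj (U h) = twirl \<mu> U M"
proof -
  have "U h ** twirl \<mu> U M ** adj (U h) = integral\<^sup>L \<mu> (\<lambda>g. U h ** (U g ** M ** adj (U g)) ** adj (U h))"
    unfolding twirl_def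
    by (rule integral_bounded_linear[OF bl_conj twirl_integrable[OF H U], symmetric])
  also have "\<dots> = integral\<^sup>L \<mu> (\<lambda>g. U (h + g) ** M ** adj (U (h + g)))"
    unfolding conj_comp[OF U] ..
  also have "\<dots> = twirl \<mu> U M"
    unfolding twirl_def by (rule haar_shift[OF H conj_cont[OF U]])
  finally show ?thesis .
qed

lemma twirl_const:
  assumes H: "haar_prob \<mu>" and U: "unitary_rep U"
    and inv: "\<And>g. U g ** A ** adj (U g) = A"
  shows "twirl \<mu> U A = A"
  unfolding twirl_def inv using haar_measure1[OF H] by simp

lemma twirl_idem:
  assumes H: "haar_prob \<mu>" and U: "unitary_rep U"
  shows "twirl \<mu> U (twirl \<mu> U M) = twirl \<mu> U M"
  by (rule twirl_const[OF H U twirl_inv[OF H U]])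

lemma bl_mtrace: "bounded_linear (mtrace :: complex^'n^'n \<Rightarrow> complex)"
  by (rule bl_eucl) (simp_all add: mtrace_def sum.distrib scaleR_sum_right)

lemma twirl_trace:
  assumes H: "haar_prob \<mu>" and U: "unitary_rep U"
  shows "mtrace (twirl \<mu> U M) = mtrace M"
proof -
  have e: "mtrace (U g ** M ** adj (U g)) = mtrace M" for g
  proof -
    have "mtrace (U g ** M ** adj (U g)) = mtrace (adj (U g) ** (U g ** M))" by (rule mtrace_comm)
    also have "\<dots> = mtrace M" by (simp add: matrix_mul_assoc urep_unitary[OF U])
    finally show ?thesis .
  qed
  have "mtrace (twirl \<mu> U M) = integral\<^sup>L \<mu> (\<lambda>g. mtrace (U g ** M ** adj (U g)))"
    unfolding twirl_def by (rule integral_bounded_linear[OF bl_mtrace twirl_integrable[OF H U], symmetric])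
  also have "\<dots> = mtrace M" unfolding e using haar_measure1[OF H] by simp
  finally show ?thesis .
qed

lemma sq_scaleR': "sq (r *\<^sub>R A) u v = r *\<^sub>R sq A u v"
  unfolding sq_scaleR by (simp add: scaleR_conv_of_real)

lemma bl_sq: "bounded_linear (\<lambda>X. sq X v v)"
  by (rule bl_eucl) (simp_all add: sq_add sq_scaleR')

lemma twirl_psd:
  assumes H: "haar_prob \<mu>" and U: "unitary_rep U" and P: "psd M"
  shows "psd (twirl \<mu> U M)"
  unfolding psd_iff
proof
  fix v
  define f where "f = (\<lambda>g. Re (sq M (adj (U g) *v v) (adj (U g) *v v)))"
  have e: "sq (U g ** M ** adj (U g)) v v = of_real (f g)" for g
  proof -
    have "sq (U g ** M ** adj (U g)) v v = sq M (adj (U g) *v v) (adj (U g) *v v)"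
      unfolding sq_def matrix_vector_mul_assoc[symmetric] by (rule cdot_adj)
    thus ?thesis unfolding f_def using psd_sq_real[OF P] by metis
  qed
  have "sq (twirl \<mu> U M) v v = integral\<^sup>L \<mu> (\<lambda>g. sq (U g ** M ** adj (U g)) v v)"
    unfolding twirl_def by (rule integral_bounded_linear[OF bl_sq twirl_integrable[OF H U], symmetric])
  also have "\<dots> = of_real (integral\<^sup>L \<mu> f)" unfolding e by simp
  finally have I: "sq (twirl \<mu> U M) v v = of_real (integral\<^sup>L \<mu> f)" .
  have "0 \<le> integral\<^sup>L \<mu> f" unfolding f_def by (intro integral_nonneg_AE AE_I2 psd_sq_nonneg[OF P])
  thus "sq (twirl \<mu> U M) v v \<in> \<real> \<and> 0 \<le> Re (sq (twirl \<mu> U M) v v)" unfolding I by simp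
qed

lemma twirl_density:
  assumes H: "haar_prob \<mu>" and U: "unitary_rep U" and D: "density M"
  shows "density (twirl \<mu> U M)"
  using D twirl_psd[OF H U] twirl_trace[OF H U] unfolding density_def by simp



lemma kron_mult: "kron A B ** kron C D = kron (A ** C) (B ** (D :: complex^_^_))"
proof -
  have "(kron A B ** kron C D)$p$q = kron (A ** C) (B ** D) $p$q" for p q
  proof -
    have "(kron A B ** kron C D)$p$q = (\<Sum>k\<in>UNIV. \<Sum>l\<in>UNIV. (A$fst p$k * C$k$fst q) * (B$snd p$l * D$l$snd q))"
      unfolding matrix_matrix_mult_def vec_lambda_beta sum_pair by (simp add: kron_def mult_ac)
    also have "\<dots> = kron (A ** C) (B ** D) $p$q"
      unfolding sum_product[symmetric] by (simp add: kron_def matrix_matrix_mult_def)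
    finally show ?thesis .
  qed
  thus ?thesis by (simp add: vec_eq_iff)
qed

lemma adj_kron: "adj (kron A B) = kron (adj A) (adj B)"
  by (simp add: vec_eq_iff adj_def kron_def)

lemma kron_add_left: "kron (A + B) C = kron A C + kron B C"
  by (simp add: kron_def vec_eq_iff ring_distribs)

lemma kron_scaleR_left: "kron (r *\<^sub>R A) C = r *\<^sub>R kron A C"
  by (simp add: kron_def vec_eq_iff)

lemma bl_kron_right: "bounded_linear (kron A)"
  by (rule bl_eucl) (simp_all add: kron_add kron_scaleR)

lemma bl_kron_left: "bounded_linear (\<lambda>X. kron X B)"
  by (rule bl_eucl) (simp_all add: kron_add_left kron_scaleR_left)

lemma twirl_RA:
  "twirl \<mu> (rep_RA UR UA) (kron A B) = integral\<^sup>L \<mu> (\<lambda>g. kron (UR g ** A ** adj (UR g)) (UA g ** B ** adj (UA g)))"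
  unfolding twirl_def rep_RA_def adj_kron kron_mult ..

lemma twirl_RA_prod:
  fixes UR :: "'g::topological_group_add \<Rightarrow> complex^'r^'r" and UA :: "'g \<Rightarrow> complex^'a^'a"
  assumes H: "haar_prob \<mu>" and R: "unitary_rep UR" and A: "unitary_rep UA"
  shows "twirl \<mu> (rep_RA UR UA) (kron (twirl \<mu> UR \<eta>) \<rho>) = kron (twirl \<mu> UR \<eta>) (twirl \<mu> UA \<rho>)"
    and "twirl \<mu> (rep_RA UR UA) (kron \<eta> (twirl \<mu> UA \<rho>)) = kron (twirl \<mu> UR \<eta>) (twirl \<mu> UA \<rho>)"
    and "twirl \<mu> (rep_RA UR UA) (kron (twirl \<mu> UR \<eta>) (twirl \<mu> UA \<rho>)) = kron (twirl \<mu> UR \<eta>) (twirl \<mu> UA \<rho>)"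
proof -
  show "twirl \<mu> (rep_RA UR UA) (kron (twirl \<mu> UR \<eta>) \<rho>) = kron (twirl \<mu> UR \<eta>) (twirl \<mu> UA \<rho>)"
    unfolding twirl_RA twirl_inv[OF H R]
    unfolding twirl_def
    by (rule integral_bounded_linear[OF bl_kron_right twirl_integrable[OF H A]])
  show "twirl \<mu> (rep_RA UR UA) (kron \<eta> (twirl \<mu> UA \<rho>)) = kron (twirl \<mu> UR \<eta>) (twirl \<mu> UA \<rho>)"
    unfolding twirl_RA twirl_inv[OF H A]
    unfolding twirl_def
    by (rule integral_bounded_linear[OF bl_kron_left twirl_integrable[OF H R]])
  show "twirl \<mu> (rep_RA UR UA) (kron (twirl \<mu> UR \<eta>) (twirl \<mu> UA \<rho>)) = kron (twirl \<mu> UR \<eta>) (twirl \<mu> UA \<rho>)"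
    unfolding twirl_RA twirl_inv[OF H A] twirl_inv[OF H R]
    using haar_measure1[OF H] by simp
qed

theorem lemma4:
  fixes \<mu> :: "'g::topological_group_add measure"
    and UR :: "'g \<Rightarrow> complex^'r^'r" and UA :: "'g \<Rightarrow> complex^'a^'a"
    and \<rho> :: "complex^'a^'a" and \<eta> :: "complex^'r^'r"
  assumes "haar_prob \<mu>" and "unitary_rep UR" and "unitary_rep UA"
    and "density \<rho>" and "density \<eta>"
  shows "H_eta \<mu> UR UA (twirl \<mu> UR \<eta>) \<rho> = H_eta \<mu> UR UA \<eta> (twirl \<mu> UA \<rho>)
    \<and> H_eta \<mu> UR UA \<eta> (twirl \<mu> UA \<rho>) = H_eta \<mu> UR UA (twirl \<mu> UR \<eta>) (twirl \<mu> UA \<rho>)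
    \<and> H_eta \<mu> UR UA (twirl \<mu> UR \<eta>) (twirl \<mu> UA \<rho>) = - log 2 (onorm (\<lambda>v. twirl \<mu> UR \<eta> *v v))"
proof -
  note P = twirl_RA_prod[OF assms(1-3), of \<eta> \<rho>]
  have dR: "density (twirl \<mu> UR \<eta>)" by (rule twirl_density[OF assms(1,2,5)])
  have dA: "density (twirl \<mu> UA \<rho>)" by (rule twirl_density[OF assms(1,3,4)])
  show ?thesis
    unfolding H_eta_def P Hmin_kron[OF dR dA] by simp
qed


end
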